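(* The block-asynchronous linear iteration for solving the lower block triangular system $\mathbf{Lx}=\mathbf{b}$ converges in a finite number of steps to the solution $\mathbf{L}^{-1}\mathbf{b}$.
   Context: $\mathbf{L}\in\mathbb{R}^{n\times n}$ is lower block triangular with square $b\times b$ blocks ($n$ divisible by $b$, $n/b$ blocks) and nonsingular diagonal blocks, split as $\mathbf{L}=\mathbf{D}+\tilde{\mathbf{L}}$ with $\mathbf{D}$ block diagonal and $\tilde{\mathbf{L}}$ strictly lower block triangular. Let $\boldsymbol{\psi}(\mathbf{x}):=\mathbf{D}^{-1}\mathbf{b}-\mathbf{D}^{-1}\tilde{\mathbf{L}}\mathbf{x}$, and denote by $\mathbf{x}_i$, $\boldsymbol{\psi}_i$ the $i$th sub-vector of length $b$. The block-asynchronous iteration is $\mathbf{x}_i^{j+1}=\mathbf{x}_i^j$ if $i\neq u(j)$ and $\mathbf{x}_i^{j+1}=\boldsymbol{\psi}_i(x_1^{j-s_1(j)},\dots,x_n^{j-s_n(j)})$ if $i=u(j)$, where the shift functions $s_\alpha:\mathbb{N}\to\mathbb{N}$ ($\alpha=1,\dots,n$) satisfy $0\le s_\alpha(j)\le\min\{j-1,\hat s\}$ for some fixed $\hat s\in\mathbb{N}$, and the update function $u:\mathbb{N}\to\{1,\dots,n/b\}$ satisfies: for every $i\in\{1,\dots,n/b\}$ and $j\in\mathbb{N}$ there exists $l>j$ with $u(l)=i$. *)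

theory Defs
  imports "Jordan_Normal_Form.Matrix"
begin

(* Conventions: indices are 0-based; block I (0 \<le> I < n div bs) consists of rows/columns
   I*bs, ..., I*bs + bs - 1.  Block size is bs (the paper's b); right-hand side is bv. *)

definition lower_block_triangular :: "nat \<Rightarrow> real mat \<Rightarrow> bool" where
  "lower_block_triangular bs L \<longleftrightarrow>
     (\<forall>i < dim_row L. \<forall>k < dim_col L. i div bs < k div bs \<longrightarrow> L $$ (i, k) = 0)"

definition diag_block :: "nat \<Rightarrow> real mat \<Rightarrow> nat \<Rightarrow> real mat" where
  "diag_block bs L I = mat bs bs (\<lambda>(p, q). L $$ (I * bs + p, I * bs + q))"

definition block_diag_part :: "nat \<Rightarrow> real mat \<Rightarrow> real mat" where
  "block_diag_part bs L = mat (dim_row L) (dim_col L)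
     (\<lambda>(i, k). if i div bs = k div bs then L $$ (i, k) else 0)"

definition strict_lower_part :: "nat \<Rightarrow> real mat \<Rightarrow> real mat" where
  "strict_lower_part bs L = mat (dim_row L) (dim_col L)
     (\<lambda>(i, k). if k div bs < i div bs then L $$ (i, k) else 0)"

definition mat_inv :: "real mat \<Rightarrow> real mat" where
  "mat_inv A = (SOME B. inverts_mat A B \<and> inverts_mat B A)"

definition psi :: "nat \<Rightarrow> real mat \<Rightarrow> real vec \<Rightarrow> real vec \<Rightarrow> real vec" where
  "psi bs L bv z = mat_inv (block_diag_part bs L) *\<^sub>v bv
                   - mat_inv (block_diag_part bs L) *\<^sub>v (strict_lower_part bs L *\<^sub>v z)"

end

theory Submission
  imports Defs "Jordan_Normal_Form.Determinant"
begin

lemma inj_inverse: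
  assumes A: "(A :: real mat) \<in> carrier_mat n n"
    and inj: "\<And>v. v \<in> carrier_vec n \<Longrightarrow> A *\<^sub>v v = 0\<^sub>v n \<Longrightarrow> v = 0\<^sub>v n"
  shows "mat_inv A \<in> carrier_mat n n \<and> A * mat_inv A = 1\<^sub>m n \<and> mat_inv A * A = 1\<^sub>m n"
proof -
  have "det A \<noteq> 0" using det_0_iff_vec_prod_zero_field[OF A] inj by blast
  from det_non_zero_imp_unit[OF A this, of "()"]
  obtain B where B: "B \<in> carrier_mat n n" "B * A = 1\<^sub>m n" "A * B = 1\<^sub>m n"
    unfolding Units_def ring_mat_def by auto
  have "\<exists>B. inverts_mat A B \<and> inverts_mat B A"
    using A B unfolding inverts_mat_def by auto
  hence "inverts_mat A (mat_inv A) \<and> inverts_mat (mat_inv A) A"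
    unfolding mat_inv_def by (rule someI_ex)
  hence 1: "A * mat_inv A = 1\<^sub>m n" and 2: "mat_inv A * A = 1\<^sub>m (dim_row (mat_inv A))"
    using A unfolding inverts_mat_def by auto
  have "dim_col (mat_inv A) = n" using arg_cong[OF 1, of dim_col] by simp
  moreover have "dim_row (mat_inv A) = n" using arg_cong[OF 2, of dim_col] A by simp
  ultimately show ?thesis using 1 2 by auto
qed

lemma block_sum:
  fixes f :: "nat \<Rightarrow> real"
  assumes bs: "0 < bs" and I: "I < n div bs" and z: "\<And>k. k < n \<Longrightarrow> k div bs \<noteq> I \<Longrightarrow> f k = 0"
  shows "(\<Sum>k<n. f k) = (\<Sum>q<bs. f (I * bs + q))"
proof -
  have sub: "{I*bs..<I*bs+bs} \<subseteq> {..<n}"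
  proof -
    have "Suc I \<le> n div bs" using I by simp
    hence "Suc I * bs \<le> n div bs * bs" by (rule mult_le_mono1)
    also have "\<dots> \<le> n" by simp
    finally show ?thesis by auto
  qed
  have "(\<Sum>k<n. f k) = (\<Sum>k\<in>{I*bs..<I*bs+bs}. f k)"
  proof (rule sum.mono_neutral_right[OF _ sub])
    show "\<forall>i\<in>{..<n} - {I * bs..<I * bs + bs}. f i = 0"
    proof
      fix i assume "i \<in> {..<n} - {I * bs..<I * bs + bs}"
      hence "i < n" "\<not> (I*bs \<le> i \<and> i < I*bs+bs)" by auto
      moreover have "i div bs = I \<Longrightarrow> I*bs \<le> i \<and> i < I*bs+bs"
      proof -
        assume "i div bs = I"
        hence e: "I * bs + i mod bs = i" using div_mult_mod_eq[of i bs] by simp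
        have "i mod bs < bs" using bs by simp
        thus ?thesis using e by linarith
      qed
      ultimately show "f i = 0" using z by blast
    qed
  qed auto
  also have "\<dots> = (\<Sum>q<bs. f (I * bs + q))"
  proof -
    have "(\<Sum>k\<in>{0 + I*bs..<bs + I*bs}. f k) = (\<Sum>i\<in>{0..<bs}. f (i + I*bs))"
      by (rule sum.shift_bounds_nat_ivl)
    thus ?thesis by (simp add: add.commute atLeast0LessThan)
  qed
  finally show ?thesis .
qed

lemma block_kernel:
  assumes bs: "0 < bs" and M: "(M :: real mat) \<in> carrier_mat n n" and I: "I < n div bs"
    and inv: "invertible_mat (diag_block bs M I)"
    and v: "v \<in> carrier_vec n"
    and off: "\<And>r k. r < n \<Longrightarrow> k < n \<Longrightarrow> r div bs = I \<Longrightarrow> k div bs \<noteq> I \<Longrightarrow> M $$ (r, k) * v $ k = 0"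
    and zero: "\<And>r. r < n \<Longrightarrow> r div bs = I \<Longrightarrow> (M *\<^sub>v v) $ r = 0"
    and r: "r < n" "r div bs = I"
  shows "v $ r = 0"
proof -
  have sub: "\<And>q. q < bs \<Longrightarrow> I * bs + q < n \<and> (I*bs+q) div bs = I"
  proof -
    fix q assume q: "q < bs"
    have "Suc I \<le> n div bs" using I by simp
    hence "Suc I * bs \<le> n div bs * bs" by (rule mult_le_mono1)
    also have "\<dots> \<le> n" by simp
    finally show "I * bs + q < n \<and> (I*bs+q) div bs = I" using q bs by auto
  qed
  define w where "w = vec bs (\<lambda>p. v $ (I*bs+p))"
  define A where "A = diag_block bs M I"
  have A: "A \<in> carrier_mat bs bs" unfolding A_def diag_block_def by simp
  have w: "w \<in> carrier_vec bs" unfolding w_def by simp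
  have Aw: "A *\<^sub>v w = 0\<^sub>v bs"
  proof (rule eq_vecI)
    show "dim_vec (A *\<^sub>v w) = dim_vec (0\<^sub>v bs)" using A by simp
    fix p assume "p < dim_vec (0\<^sub>v bs)"
    hence p: "p < bs" by simp
    have "(M *\<^sub>v v) $ (I*bs+p) = row M (I*bs+p) \<bullet> v"
      using M sub[OF p] by simp
    also have "\<dots> = (\<Sum>k\<in>{0..<n}. row M (I*bs+p) $ k * v $ k)"
      unfolding scalar_prod_def using v by simp
    also have "\<dots> = (\<Sum>k<n. M $$ (I*bs+p, k) * v $ k)"
      unfolding atLeast0LessThan by (rule sum.cong, use M sub[OF p] in auto)
    also have "\<dots> = (\<Sum>q<bs. M $$ (I*bs+p, I*bs+q) * v $ (I*bs+q))"
    proof (rule block_sum[OF bs I])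
      fix k assume "k < n" "k div bs \<noteq> I"
      thus "M $$ (I * bs + p, k) * v $ k = 0" using off sub[OF p] by blast
    qed
    also have "\<dots> = (\<Sum>q\<in>{0..<bs}. row A p $ q * w $ q)"
      unfolding atLeast0LessThan
      by (rule sum.cong, use p in \<open>auto simp: A_def w_def diag_block_def\<close>)
    also have "\<dots> = (A *\<^sub>v w) $ p"
      using p A w by (simp add: scalar_prod_def)
    finally show "(A *\<^sub>v w) $ p = 0\<^sub>v bs $ p" using zero[of "I*bs+p"] sub[OF p] p by simp
  qed
  obtain B where AB: "A * B = 1\<^sub>m (dim_row A)" and BA: "B * A = 1\<^sub>m (dim_row B)"
    using inv unfolding A_def invertible_mat_def inverts_mat_def by blast
  have "dim_row B = bs" using arg_cong[OF BA, of dim_col] A by simp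
  moreover have "dim_col B = bs" using arg_cong[OF AB, of dim_col] A by simp
  ultimately have Bc: "B \<in> carrier_mat bs bs" by auto
  have "w = (B * A) *\<^sub>v w" using BA Bc w by simp
  also have "\<dots> = B *\<^sub>v (A *\<^sub>v w)" using Bc A w by simp
  also have "\<dots> = 0\<^sub>v bs" unfolding Aw using Bc by (intro eq_vecI, auto simp: scalar_prod_def)
  finally have w0: "w = 0\<^sub>v bs" .
  have rm: "r mod bs < bs" using bs by simp
  have "I * bs + r mod bs = r" using r div_mult_mod_eq[of r bs] by simp
  hence "w $ (r mod bs) = v $ r" unfolding w_def using rm by simp
  thus ?thesis using w0 rm by simp
qed


lemma blk_sub:
  fixes I bs n q :: nat
  assumes bs: "0 < bs" and I: "I < n div bs" and q: "q < bs"
  shows "I * bs + q < n \<and> (I*bs+q) div bs = I"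
proof -
  have "Suc I \<le> n div bs" using I by simp
  hence "Suc I * bs \<le> n div bs * bs" by (rule mult_le_mono1)
  also have "\<dots> \<le> n" by simp
  finally show ?thesis using q bs by auto
qed

lemma div_lt:
  fixes bs n k :: nat
  assumes bs: "0 < bs" and dvd: "bs dvd n" and k: "k < n"
  shows "k div bs < n div bs"
proof -
  obtain c where c: "n = bs * c" using dvd by blast
  have "k < bs * c" using k c by simp
  hence "k < c * bs" by (simp add: mult.commute)
  hence "k div bs < c" by (rule less_mult_imp_div_less)
  thus ?thesis using c bs by simp
qed

lemma lbt_inj:
  assumes bs: "0 < bs" and dvd: "bs dvd n" and M: "(M :: real mat) \<in> carrier_mat n n"
    and lbt: "lower_block_triangular bs M"
    and inv: "\<forall>I<n div bs. invertible_mat (diag_block bs M I)"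
    and v: "v \<in> carrier_vec n" and Mv: "M *\<^sub>v v = 0\<^sub>v n"
  shows "v = 0\<^sub>v n"
proof -
  have dM: "dim_row M = n" "dim_col M = n" using M by auto
  have all: "\<forall>k<n. k div bs < I \<longrightarrow> v $ k = 0" for I
  proof (induction I)
    case 0 show ?case by simp
  next
    case (Suc I)
    show ?case
    proof (cases "I < n div bs")
      case True
      have blk: "v $ r = 0" if "r < n" "r div bs = I" for r
      proof (rule block_kernel[OF bs M True inv[rule_format, OF True] v _ _ that])
        fix r k assume rk: "r < n" "k < n" "r div bs = I" "k div bs \<noteq> I"
        show "M $$ (r, k) * v $ k = 0"
        proof (cases "k div bs < I")
          case True thus ?thesis using Suc.IH rk by simp
        next
          case False
          hence "r div bs < k div bs" using rk by simp
          hence "M $$ (r, k) = 0" using lbt rk(1,2) unfolding lower_block_triangular_def dM by blast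
          thus ?thesis by simp
        qed
      next
        fix r assume "r < n" "r div bs = I"
        thus "(M *\<^sub>v v) $ r = 0" using Mv by simp
      qed
      show ?thesis
      proof (intro allI impI)
        fix k assume k: "k < n" "k div bs < Suc I"
        show "v $ k = 0"
        proof (cases "k div bs < I")
          case True thus ?thesis using Suc.IH k by blast
        next
          case False
          hence "k div bs = I" using k by simp
          thus ?thesis using blk k by blast
        qed
      qed
    next
      case False
      show ?thesis
      proof (intro allI impI)
        fix k assume k: "k < n" "k div bs < Suc I"
        have "k div bs < I" using div_lt[OF bs dvd k(1)] False by simp
        thus "v $ k = 0" using Suc.IH k by blast
      qed
    qed
  qed
  show ?thesis
  proof (rule eq_vecI)
    show "dim_vec v = dim_vec (0\<^sub>v n)" using v by simp
    fix i assume "i < dim_vec (0\<^sub>v n)"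
    hence i: "i < n" by simp
    thus "v $ i = 0\<^sub>v n $ i" using all[of "n div bs"] div_lt[OF bs dvd i] by simp
  qed
qed

theorem theorem4:
  fixes n bs :: nat and L :: "real mat" and bv :: "real vec"
    and x :: "nat \<Rightarrow> real vec"
    and s :: "nat \<Rightarrow> nat \<Rightarrow> nat" and u :: "nat \<Rightarrow> nat" and s_hat :: nat
  assumes bs_pos: "0 < bs"
    and div: "bs dvd n"
    and L_dim: "L \<in> carrier_mat n n"
    and bv_dim: "bv \<in> carrier_vec n"
    and L_lbt: "lower_block_triangular bs L"
    and diag_nonsing: "\<forall>I < n div bs. invertible_mat (diag_block bs L I)"
    and shift_bound: "\<forall>\<alpha> < n. \<forall>j \<ge> 1. s \<alpha> j \<le> min (j - 1) s_hat"
    and u_range: "\<forall>j \<ge> 1. u j < n div bs"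
    and u_inf: "\<forall>i < n div bs. \<forall>j \<ge> 1. \<exists>l > j. u l = i"
    and x_init: "x 1 \<in> carrier_vec n"
    and x_step: "\<forall>j \<ge> 1. x (Suc j) = vec n (\<lambda>\<alpha>.
                    if \<alpha> div bs = u j
                    then psi bs L bv (vec n (\<lambda>\<beta>. x (j - s \<beta> j) $ \<beta>)) $ \<alpha>
                    else x j $ \<alpha>)"
  shows "\<exists>J \<ge> 1. \<forall>j \<ge> J. x j = mat_inv L *\<^sub>v bv"
proof -
  define D where "D = block_diag_part bs L"
  define Lt where "Lt = strict_lower_part bs L"
  have dL: "dim_row L = n" "dim_col L = n" using L_dim by auto
  have Dc: "D \<in> carrier_mat n n" unfolding D_def block_diag_part_def using dL by simp
  have Ltc: "Lt \<in> carrier_mat n n" unfolding Lt_def strict_lower_part_def using dL by simp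
  have D_lbt: "lower_block_triangular bs D"
    unfolding lower_block_triangular_def D_def block_diag_part_def by auto
  have D_diag: "diag_block bs D I = diag_block bs L I" if I: "I < n div bs" for I
  proof (rule eq_matI)
    fix i j assume "i < dim_row (diag_block bs L I)" "j < dim_col (diag_block bs L I)"
    hence ij: "i < bs" "j < bs" unfolding diag_block_def by auto
    show "diag_block bs D I $$ (i, j) = diag_block bs L I $$ (i, j)"
      using ij blk_sub[OF bs_pos I ij(1)] blk_sub[OF bs_pos I ij(2)] dL
      unfolding diag_block_def D_def block_diag_part_def by simp
  qed (auto simp: diag_block_def)
  have L_eq: "L = D + Lt"
  proof (rule eq_matI)
    fix i j assume "i < dim_row (D + Lt)" "j < dim_col (D + Lt)"
    hence ij: "i < n" "j < n" using Dc Ltc by auto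
    have "i div bs < j div bs \<Longrightarrow> L $$ (i, j) = 0"
      using L_lbt ij unfolding lower_block_triangular_def dL by blast
    thus "L $$ (i, j) = (D + Lt) $$ (i, j)"
      using ij Dc Ltc dL unfolding D_def Lt_def block_diag_part_def strict_lower_part_def
      by (cases "i div bs = j div bs"; cases "j div bs < i div bs") auto
  qed (use Dc Ltc dL in auto)
  have Dinv: "mat_inv D \<in> carrier_mat n n \<and> D * mat_inv D = 1\<^sub>m n \<and> mat_inv D * D = 1\<^sub>m n"
    by (rule inj_inverse[OF Dc], rule lbt_inj[OF bs_pos div Dc D_lbt], use diag_nonsing D_diag in auto)
  have Linv: "mat_inv L \<in> carrier_mat n n \<and> L * mat_inv L = 1\<^sub>m n \<and> mat_inv L * L = 1\<^sub>m n"
    by (rule inj_inverse[OF L_dim], rule lbt_inj[OF bs_pos div L_dim L_lbt diag_nonsing], auto)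
  define Di where "Di = mat_inv D"
  have Dic: "Di \<in> carrier_mat n n" and DDi: "D * Di = 1\<^sub>m n" using Dinv unfolding Di_def by auto
  define y where "y = mat_inv L *\<^sub>v bv"
  have yc: "y \<in> carrier_vec n" unfolding y_def using Linv bv_dim by auto
  have Ly: "L *\<^sub>v y = bv"
  proof -
    have Lic: "mat_inv L \<in> carrier_mat n n" and LLi: "L * mat_inv L = 1\<^sub>m n" using Linv by auto
    have "(L * mat_inv L) *\<^sub>v bv = L *\<^sub>v (mat_inv L *\<^sub>v bv)"
      by (rule assoc_mult_mat_vec[OF L_dim Lic bv_dim])
    thus ?thesis unfolding y_def LLi using bv_dim by simp
  qed
  have Dy: "(D *\<^sub>v y) $ r = bv $ r - (Lt *\<^sub>v y) $ r" if r: "r < n" for r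
  proof -
    have "bv = D *\<^sub>v y + Lt *\<^sub>v y" using Ly L_eq add_mult_distrib_mat_vec[OF Dc Ltc yc] by simp
    hence "bv $ r = (D *\<^sub>v y) $ r + (Lt *\<^sub>v y) $ r" using r Dc Ltc by simp
    thus ?thesis by simp
  qed
  have psi_blk: "psi bs L bv z $ r = y $ r"
    if zc: "z \<in> carrier_vec n" and I: "I < n div bs"
      and agree: "\<forall>k<n. k div bs < I \<longrightarrow> z $ k = y $ k"
      and r: "r < n" "r div bs = I" for z I r
  proof -
    define w where "w = psi bs L bv z"
    have w_eq: "w = Di *\<^sub>v bv - Di *\<^sub>v (Lt *\<^sub>v z)"
      unfolding w_def psi_def Di_def D_def Lt_def ..
    have wc: "w \<in> carrier_vec n" unfolding w_eq using Dic unfolding carrier_vec_def by simp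
    have Dw: "D *\<^sub>v w = bv - Lt *\<^sub>v z"
    proof -
      have "D *\<^sub>v w = D *\<^sub>v (Di *\<^sub>v bv) - D *\<^sub>v (Di *\<^sub>v (Lt *\<^sub>v z))"
        unfolding w_eq using Dc Dic bv_dim Ltc zc by (subst mult_minus_distrib_mat_vec) auto
      also have "\<dots> = (D * Di) *\<^sub>v bv - (D * Di) *\<^sub>v (Lt *\<^sub>v z)"
        using Dc Dic bv_dim Ltc zc by simp
      also have "\<dots> = bv - Lt *\<^sub>v z" unfolding DDi using bv_dim Ltc zc by simp
      finally show ?thesis .
    qed
    have Ltzy: "(Lt *\<^sub>v z) $ r' = (Lt *\<^sub>v y) $ r'" if r': "r' < n" "r' div bs = I" for r'
    proof -
      have "(Lt *\<^sub>v z) $ r' = (\<Sum>k\<in>{0..<n}. row Lt r' $ k * z $ k)"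
        using Ltc zc r' by (simp add: scalar_prod_def)
      also have "\<dots> = (\<Sum>k\<in>{0..<n}. row Lt r' $ k * y $ k)"
      proof (rule sum.cong)
        fix k assume "k \<in> {0..<n}"
        hence k: "k < n" by simp
        show "row Lt r' $ k * z $ k = row Lt r' $ k * y $ k"
        proof (cases "k div bs < I")
          case True thus ?thesis using agree k by simp
        next
          case False thus ?thesis using k r' Ltc dL unfolding Lt_def strict_lower_part_def by simp
        qed
      qed simp
      also have "\<dots> = (Lt *\<^sub>v y) $ r'"
        using Ltc yc r' by (simp add: scalar_prod_def)
      finally show ?thesis .
    qed
    have "(w - y) $ r = 0"
    proof (rule block_kernel[OF bs_pos Dc I _ _ _ _ r])
      show "invertible_mat (diag_block bs D I)" using D_diag[OF I] diag_nonsing I by simp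
      show "w - y \<in> carrier_vec n" using wc yc by simp
      fix r' k assume rk: "r' < n" "k < n" "r' div bs = I" "k div bs \<noteq> I"
      thus "D $$ (r', k) * (w - y) $ k = 0" unfolding D_def block_diag_part_def using dL by simp
    next
      fix r' assume r': "r' < n" "r' div bs = I"
      have "D *\<^sub>v (w - y) = D *\<^sub>v w - D *\<^sub>v y"
        using Dc wc yc by (rule mult_minus_distrib_mat_vec)
      hence "(D *\<^sub>v (w - y)) $ r' = (D *\<^sub>v w) $ r' - (D *\<^sub>v y) $ r'"
        using r' Dc by simp
      also have "\<dots> = 0" unfolding Dw using Dy[OF r'(1)] Ltzy[OF r'] r' bv_dim Ltc by simp
      finally show "(D *\<^sub>v (w - y)) $ r' = 0" .
    qed
    thus ?thesis using r wc yc unfolding w_def[symmetric] by simp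
  qed
  define zz where "zz j = vec n (\<lambda>\<beta>. x (j - s \<beta> j) $ \<beta>)" for j
  have zzc: "zz j \<in> carrier_vec n" for j unfolding zz_def by simp
  have upd: "x (Suc j) $ a = (if a div bs = u j then psi bs L bv (zz j) $ a else x j $ a)"
    if "j \<ge> 1" "a < n" for j a
    using x_step that unfolding zz_def by simp
  have xc: "x j \<in> carrier_vec n" if "j \<ge> 1" for j
  proof (cases j)
    case 0 thus ?thesis using that by simp
  next
    case (Suc j')
    show ?thesis
    proof (cases "j' = 0")
      case True thus ?thesis using x_init Suc by simp
    next
      case False
      hence "j' \<ge> 1" by simp
      thus ?thesis using x_step Suc by simp
    qed
  qed
  have claim: "I \<le> n div bs \<Longrightarrow> \<exists>J\<ge>1. \<forall>j\<ge>J. \<forall>k<n. k div bs < I \<longrightarrow> x j $ k = y $ k" for I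
  proof (induction I)
    case 0 show ?case by auto
  next
    case (Suc I)
    hence I: "I < n div bs" by simp
    from Suc obtain J where J: "J \<ge> 1" "\<forall>j\<ge>J. \<forall>k<n. k div bs < I \<longrightarrow> x j $ k = y $ k" by auto
    obtain l where l: "l > J + s_hat" "u l = I" using u_inf I J(1) by (meson le_add1 le_trans)
    have zz_agree: "\<forall>k<n. k div bs < I \<longrightarrow> zz j $ k = y $ k" if j: "j \<ge> l" for j
    proof (intro allI impI)
      fix k assume k: "k < n" "k div bs < I"
      have "s k j \<le> s_hat" using shift_bound k(1) j l J(1) by fastforce
      hence "j - s k j \<ge> J" using j l by linarith
      thus "zz j $ k = y $ k" using J(2) k unfolding zz_def by simp
    qed
    have stp: "\<forall>k<n. k div bs = I \<longrightarrow> x (Suc j) $ k = y $ k"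
      if j: "j \<ge> l" and prev: "u j = I \<or> (\<forall>k<n. k div bs = I \<longrightarrow> x j $ k = y $ k)" for j
    proof (intro allI impI)
      fix k assume k: "k < n" "k div bs = I"
      have j1: "j \<ge> 1" using j l by linarith
      show "x (Suc j) $ k = y $ k"
      proof (cases "u j = I")
        case True
        hence "x (Suc j) $ k = psi bs L bv (zz j) $ k" using upd[OF j1 k(1)] k by simp
        also have "\<dots> = y $ k" by (rule psi_blk[OF zzc I zz_agree[OF j] k])
        finally show ?thesis .
      next
        case False
        hence "x (Suc j) $ k = x j $ k" using upd[OF j1 k(1)] k by simp
        thus ?thesis using prev False k by simp
      qed
    qed
    have blk: "\<forall>k<n. k div bs = I \<longrightarrow> x j $ k = y $ k" if j: "j \<ge> Suc l" for j
      using j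
    proof (induction j rule: dec_induct)
      case base thus ?case using stp[of l] l by simp
    next
      case (step j) thus ?case using stp[of j] by simp
    qed
    show ?case
    proof (intro exI[of _ "Suc l"] conjI allI impI)
      fix j k assume j: "j \<ge> Suc l" and k: "k < n" "k div bs < Suc I"
      show "x j $ k = y $ k"
      proof (cases "k div bs < I")
        case True thus ?thesis using J(2) j l k by simp
      next
        case False thus ?thesis using blk[OF j] k by simp
      qed
    qed simp
  qed
  obtain J where J: "J \<ge> 1" "\<forall>j\<ge>J. \<forall>k<n. k div bs < n div bs \<longrightarrow> x j $ k = y $ k"
    using claim[of "n div bs"] by auto
  show ?thesis
  proof (intro exI[of _ J] conjI allI impI)
    fix j assume j: "j \<ge> J"
    show "x j = mat_inv L *\<^sub>v bv" unfolding y_def[symmetric]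
    proof (rule eq_vecI)
      show "dim_vec (x j) = dim_vec y" using xc[of j] j J(1) yc by simp
      fix k assume "k < dim_vec y"
      hence k: "k < n" using yc by simp
      thus "x j $ k = y $ k" using J(2) j div_lt[OF bs_pos div k] by simp
    qed
  qed (rule J(1))
qed

end
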